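(* Let $d=2$. There is a constant $c_2$ depending only on the dimension such that for all $N\ge1$, $n\ge1$ and integers $0=i_0<i_1<\cdots<i_n\le N$, $$\sum_{x_1,\dots,x_n\in\mathbb{Z}^2}\ \prod_{k=1}^n p_0^2(i_k-i_{k-1},x_k-x_{k-1})\left(\sum_{x\in\mathbb{Z}^2}|x|^2p_0(N-i_n,x-x_n)\right)^2\le c_2^nN^2\prod_{k=1}^n(i_k-i_{k-1})^{-1},$$ where $x_0=0$.
   Context: $p_0(n,x)$ is the probability that simple random walk on $\mathbb{Z}^2$ started at $0$ is at $x$ at time $n$; $|\cdot|$ is the Euclidean norm. *)

theory Defs
  imports "HOL-Analysis.Analysis"
begin

fun p0 :: "nat \<Rightarrow> int \<times> int \<Rightarrow> real" where
  "p0 0 x = (if x = (0, 0) then 1 else 0)"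
| "p0 (Suc n) (a, b) =
     (p0 n (a - 1, b) + p0 n (a + 1, b) + p0 n (a, b - 1) + p0 n (a, b + 1)) / 4"

definition sqnorm :: "int \<times> int \<Rightarrow> real" where
  "sqnorm x = real_of_int (fst x) ^ 2 + real_of_int (snd x) ^ 2"

end

theory Submission
  imports Defs
begin


lemma p0_nonneg: "p0 t x \<ge> 0"
  by (induction t arbitrary: x) (auto simp: case_prod_beta intro!: add_nonneg_nonneg)

lemma p0_supp: "p0 t (a,b) \<noteq> 0 \<Longrightarrow> \<bar>a\<bar> \<le> int t \<and> \<bar>b\<bar> \<le> int t"
proof (induction t arbitrary: a b)
  case 0 then show ?case by (auto split: if_splits)
next
  case (Suc t)
  then have "p0 t (a - 1, b) \<noteq> 0 \<or> p0 t (a + 1, b) \<noteq> 0 \<or> p0 t (a, b - 1) \<noteq> 0 \<or> p0 t (a, b + 1) \<noteq> 0"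
    by auto
  then show ?case using Suc.IH by fastforce
qed

definition box :: "int \<times> int \<Rightarrow> nat \<Rightarrow> (int \<times> int) set" where
  "box z j = {fst z - int j .. fst z + int j} \<times> {snd z - int j .. snd z + int j}"

lemma finite_box: "finite (box z j)" by (simp add: box_def)

lemma p0_shift_supp: "y \<notin> box z j \<Longrightarrow> p0 j (y - z) = 0"
proof -
  assume "y \<notin> box z j"
  obtain y1 y2 z1 z2 where yz: "y = (y1,y2)" "z = (z1,z2)" by (cases y, cases z)
  show ?thesis
  proof (rule ccontr)
    assume "p0 j (y - z) \<noteq> 0"
    then have "p0 j (y1 - z1, y2 - z2) \<noteq> 0" using yz by simp
    from p0_supp[OF this] \<open>y \<notin> box z j\<close> yz show False by (auto simp: box_def)
  qed
qed

lemma fs_summable: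
  fixes g :: "'a \<Rightarrow> real"
  assumes "finite B" "\<And>y. y \<notin> B \<Longrightarrow> g y = 0"
  shows "g summable_on UNIV" "infsum g UNIV = sum g B"
proof -
  have "g summable_on UNIV \<longleftrightarrow> g summable_on B"
    by (rule summable_on_cong_neutral) (use assms in auto)
  then show "g summable_on UNIV" using assms by simp
  have "infsum g UNIV = infsum g B"
    by (rule infsum_cong_neutral) (use assms in auto)
  then show "infsum g UNIV = sum g B" using assms by simp
qed

definition A :: "(int \<times> int \<Rightarrow> real) \<Rightarrow> int \<times> int \<Rightarrow> real" where
  "A f z = (f (z + (1,0)) + f (z + (-1,0)) + f (z + (0,1)) + f (z + (0,-1))) / 4"

lemma p0_Suc_shift: "p0 (Suc j) (y - z) =
   (p0 j (y - (z + (1,0))) + p0 j (y - (z + (-1,0))) + p0 j (y - (z + (0,1))) + p0 j (y - (z + (0,-1)))) / 4"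
  by (cases y, cases z) (simp add: algebra_simps)

lemma summ_p0: "(\<lambda>y. p0 j (y - z) * f y) summable_on UNIV"
  by (rule fs_summable(1)[OF finite_box[of z j]]) (simp add: p0_shift_supp)

lemma infsum_add4:
  fixes f1 f2 f3 f4 :: "'a \<Rightarrow> real"
  assumes "f1 summable_on B" "f2 summable_on B" "f3 summable_on B" "f4 summable_on B"
  shows "infsum (\<lambda>x. (f1 x + f2 x + f3 x + f4 x) / 4) B = (infsum f1 B + infsum f2 B + infsum f3 B + infsum f4 B) / 4"
proof -
  have s12: "(\<lambda>x. f1 x + f2 x) summable_on B" using assms by (intro summable_on_add)
  have s123: "(\<lambda>x. f1 x + f2 x + f3 x) summable_on B" using s12 assms by (intro summable_on_add)
  have s1234: "(\<lambda>x. f1 x + f2 x + f3 x + f4 x) summable_on B" using s123 assms by (intro summable_on_add)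
  have "infsum (\<lambda>x. (f1 x + f2 x + f3 x + f4 x) * inverse 4) B = infsum (\<lambda>x. f1 x + f2 x + f3 x + f4 x) B * inverse 4"
    by (rule infsum_cmult_left[OF s1234])
  also have "infsum (\<lambda>x. f1 x + f2 x + f3 x + f4 x) B = infsum (\<lambda>x. f1 x + f2 x + f3 x) B + infsum f4 B"
    by (rule infsum_add[OF s123 assms(4)])
  also have "infsum (\<lambda>x. f1 x + f2 x + f3 x) B = infsum (\<lambda>x. f1 x + f2 x) B + infsum f3 B"
    by (rule infsum_add[OF s12 assms(3)])
  also have "infsum (\<lambda>x. f1 x + f2 x) B = infsum f1 B + infsum f2 B"
    by (rule infsum_add[OF assms(1,2)])
  finally show ?thesis unfolding divide_inverse .
qed

lemma E_eq: "infsum (\<lambda>y. p0 j (y - z) * f y) UNIV = (A ^^ j) f z"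
proof (induction j arbitrary: z)
  case 0
  have "infsum (\<lambda>y. p0 0 (y - z) * f y) UNIV = sum (\<lambda>y. p0 0 (y - z) * f y) {z}"
    by (rule fs_summable(2)) (auto simp: zero_prod_def, cases z, auto)
  then show ?case by (simp add: zero_prod_def)
next
  case (Suc j)
  let ?g = "\<lambda>e y. p0 j (y - (z + e)) * f y"
  have "infsum (\<lambda>y. p0 (Suc j) (y - z) * f y) UNIV =
        infsum (\<lambda>y. (?g (1,0) y + ?g (-1,0) y + ?g (0,1) y + ?g (0,-1) y) / 4) UNIV"
    by (simp add: p0_Suc_shift distrib_right)
  also have "\<dots> = (infsum (?g (1,0)) UNIV + infsum (?g (-1,0)) UNIV + infsum (?g (0,1)) UNIV + infsum (?g (0,-1)) UNIV) / 4"
    by (rule infsum_add4) (rule summ_p0)+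
  also have "\<dots> = A ((A ^^ j) f) z" by (simp only: Suc A_def[of "(A ^^ j) f" z])
  also have "\<dots> = (A ^^ Suc j) f z" by simp
  finally show ?case .
qed

lemma A_sq: "(A ^^ m) sqnorm = (\<lambda>x. sqnorm x + real m)"
proof (induction m)
  case 0 then show ?case by simp
next
  case (Suc m)
  show ?case
  proof
    fix z :: "int \<times> int"
    have "(A ^^ Suc m) sqnorm z = A (\<lambda>x. sqnorm x + real m) z" using Suc by simp
    then show "(A ^^ Suc m) sqnorm z = sqnorm z + real (Suc m)"
      by (cases z) (simp add: A_def sqnorm_def power2_eq_square algebra_simps)
  qed
qed

lemma core: "((((x+1)^2+y^2)^2 + \<alpha>*((x+1)^2+y^2) + \<beta>) + (((x-1)^2+y^2)^2 + \<alpha>*((x-1)^2+y^2) + \<beta>) + ((x^2+(y+1)^2)^2 + \<alpha>*(x^2+(y+1)^2) + \<beta>) + ((x^2+(y-1)^2)^2 + \<alpha>*(x^2+(y-1)^2)+\<beta>))/4 = (x^2+y^2)^2 + (\<alpha>+4)*(x^2+y^2) + (1+\<alpha>+\<beta>)"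
  for x y \<alpha> \<beta> :: real
proof -
  have "(((x+1)^2+y^2)^2 + \<alpha>*((x+1)^2+y^2) + \<beta>) + (((x-1)^2+y^2)^2 + \<alpha>*((x-1)^2+y^2) + \<beta>) + ((x^2+(y+1)^2)^2 + \<alpha>*(x^2+(y+1)^2) + \<beta>) + ((x^2+(y-1)^2)^2 + \<alpha>*(x^2+(y-1)^2)+\<beta>) = 4 * ((x^2+y^2)^2 + (\<alpha>+4)*(x^2+y^2) + (1+\<alpha>+\<beta>))"
    by algebra
  then show ?thesis by simp
qed
lemma A_quad: "A (\<lambda>y. sqnorm y^2 + \<alpha> * sqnorm y + \<beta>) = (\<lambda>y. sqnorm y^2 + (\<alpha>+4) * sqnorm y + (1+\<alpha>+\<beta>))"
proof
  fix z :: "int \<times> int"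
  obtain a b where z: "z = (a,b)" by (cases z)
  let ?f = "\<lambda>y. sqnorm y^2 + \<alpha> * sqnorm y + \<beta>"
  have "A ?f z = (?f (a+1,b) + ?f (a-1,b) + ?f (a,b+1) + ?f (a,b-1)) / 4"
    by (simp add: A_def z)
  also have "\<dots> = (real_of_int a^2+real_of_int b^2)^2 + (\<alpha>+4)*(real_of_int a^2+real_of_int b^2) + (1+\<alpha>+\<beta>)"
    by (simp only: sqnorm_def fst_conv snd_conv of_int_add of_int_diff of_int_1 core)
  finally show "A ?f z = sqnorm z^2 + (\<alpha>+4) * sqnorm z + (1+\<alpha>+\<beta>)" by (simp add: z sqnorm_def)
qed

lemma A_h: "(A ^^ j) (\<lambda>y. (sqnorm y + c)^2) =
  (\<lambda>y. sqnorm y ^2 + (4*real j + 2*c) * sqnorm y + (2*real j^2 - real j + 2*c*real j + c^2))"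
proof (induction j)
  case 0 then show ?case by (simp add: power2_eq_square algebra_simps)
next
  case (Suc j)
  have "(A ^^ Suc j) (\<lambda>y. (sqnorm y + c)^2) = A (\<lambda>y. sqnorm y ^2 + (4*real j + 2*c) * sqnorm y + (2*real j^2 - real j + 2*c*real j + c^2))"
    using Suc by simp
  also have "\<dots> = (\<lambda>y. sqnorm y ^2 + (4*real j + 2*c + 4) * sqnorm y + (1 + (4*real j + 2*c) + (2*real j^2 - real j + 2*c*real j + c^2)))"
    by (rule A_quad)
  also have "\<dots> = (\<lambda>y. sqnorm y ^2 + (4*real (Suc j) + 2*c) * sqnorm y + (2*real (Suc j)^2 - real (Suc j) + 2*c*real (Suc j) + c^2))"
    by (simp add: power2_eq_square algebra_simps)
  finally show ?case .
qed

lemma A_nonneg: "(\<And>y. f y \<ge> 0) \<Longrightarrow> (A ^^ j) f z \<ge> 0"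
  by (induction j arbitrary: z) (auto simp: A_def)

definition X :: "(int \<times> int) list \<Rightarrow> nat \<Rightarrow> int \<times> int" where
  "X xs k = (if k = 0 then (0,0) else xs ! (k - 1))"

definition LS :: "(int \<times> int) set \<Rightarrow> nat \<Rightarrow> (int \<times> int) list set" where
  "LS S n = {xs. set xs \<subseteq> S \<and> length xs = n}"

lemma finite_LS: "finite S \<Longrightarrow> finite (LS S n)"
  unfolding LS_def by (rule finite_lists_length_eq)

lemma LS_Suc: "LS S (Suc n) = (\<lambda>(xs,y). xs @ [y]) ` (LS S n \<times> S)"
proof
  show "LS S (Suc n) \<subseteq> (\<lambda>(xs,y). xs @ [y]) ` (LS S n \<times> S)"
  proof
    fix zs assume zs: "zs \<in> LS S (Suc n)"
    then have ne: "zs \<noteq> []" and sz: "set zs \<subseteq> S" and lz: "length zs = Suc n" by (auto simp: LS_def)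
    have "(butlast zs, last zs) \<in> LS S n \<times> S"
      using ne sz lz by (auto simp: LS_def dest: in_set_butlastD)
    moreover have "zs = (\<lambda>(xs,y). xs @ [y]) (butlast zs, last zs)" using ne by simp
    ultimately show "zs \<in> (\<lambda>(xs,y). xs @ [y]) ` (LS S n \<times> S)" by (rule rev_image_eqI)
  qed
  show "(\<lambda>(xs,y). xs @ [y]) ` (LS S n \<times> S) \<subseteq> LS S (Suc n)"
    by (auto simp: LS_def)
qed

lemma sum_LS_Suc: "sum g (LS S (Suc n)) = (\<Sum>xs\<in>LS S n. \<Sum>y\<in>S. g (xs @ [y]))"
proof -
  have inj: "inj_on (\<lambda>(xs,y). xs @ [y]) (LS S n \<times> S)"
    by (auto simp: inj_on_def)
  have "sum g (LS S (Suc n)) = sum (g \<circ> (\<lambda>(xs,y). xs @ [y])) (LS S n \<times> S)"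
    unfolding LS_Suc by (rule sum.reindex[OF inj])
  also have "\<dots> = (\<Sum>xs\<in>LS S n. \<Sum>y\<in>S. g (xs @ [y]))"
    by (simp add: sum.cartesian_product split_def)
  finally show ?thesis .
qed

lemma sum_le_E:
  assumes "finite S" "\<And>y. g y \<ge> 0"
  shows "(\<Sum>y\<in>S. p0 t (y - z) * g y) \<le> (A ^^ t) g z"
proof -
  have "(\<Sum>y\<in>S. p0 t (y - z) * g y) = infsum (\<lambda>y. p0 t (y - z) * g y) S"
    using assms by simp
  also have "\<dots> \<le> infsum (\<lambda>y. p0 t (y - z) * g y) UNIV"
    by (rule infsum_mono_neutral) (use assms in \<open>auto simp: summ_p0 p0_nonneg\<close>)
  finally show ?thesis by (simp add: E_eq)
qed

lemma list_bound:
  assumes "finite S" "\<And>y. g y \<ge> 0" "\<forall>k<n. i k \<le> i (Suc k)"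
  shows "(\<Sum>xs\<in>LS S n. (\<Prod>k\<in>{1..n}. p0 (i k - i (k - 1)) (X xs k - X xs (k - 1))) * g (X xs n))
         \<le> (A ^^ (i n - i 0)) g (0,0)"
  using assms(2,3)
proof (induction n arbitrary: g)
  case 0
  have "LS S 0 = {[]}" by (auto simp: LS_def)
  then show ?case by (simp add: X_def)
next
  case (Suc n)
  define t where "t = i (Suc n) - i n"
  define W where "W xs = (\<Prod>k\<in>{1..n}. p0 (i k - i (k - 1)) (X xs k - X xs (k - 1)))" for xs
  have W0: "W xs \<ge> 0" for xs unfolding W_def by (auto intro!: prod_nonneg p0_nonneg)
  have Xapp: "X (xs @ [y]) k = X xs k" if "length xs = n" "k \<le> n" for xs y k
    using that by (auto simp: X_def nth_append)
  have Xlast: "X (xs @ [y]) (Suc n) = y" if "length xs = n" for xs y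
    using that by (auto simp: X_def nth_append)
  have step: "(\<Prod>k\<in>{1..Suc n}. p0 (i k - i (k - 1)) (X (xs@[y]) k - X (xs@[y]) (k - 1))) * g (X (xs@[y]) (Suc n))
     = W xs * (p0 t (y - X xs n) * g y)" if "length xs = n" for xs y
  proof -
    have "(\<Prod>k\<in>{1..n}. p0 (i k - i (k - 1)) (X (xs@[y]) k - X (xs@[y]) (k - 1))) = W xs"
      unfolding W_def using that by (intro prod.cong) (auto simp: Xapp)
    then show ?thesis using that by (simp add: prod.cl_ivl_Suc Xapp Xlast t_def)
  qed
  have "(\<Sum>xs\<in>LS S (Suc n). (\<Prod>k\<in>{1..Suc n}. p0 (i k - i (k - 1)) (X xs k - X xs (k - 1))) * g (X xs (Suc n)))
     = (\<Sum>xs\<in>LS S n. W xs * (\<Sum>y\<in>S. p0 t (y - X xs n) * g y))"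
    unfolding sum_LS_Suc
  proof (intro sum.cong refl)
    fix xs assume "xs \<in> LS S n"
    then have "length xs = n" by (simp add: LS_def)
    show "(\<Sum>y\<in>S. (\<Prod>k\<in>{1..Suc n}. p0 (i k - i (k - 1)) (X (xs@[y]) k - X (xs@[y]) (k - 1))) * g (X (xs@[y]) (Suc n)))
      = W xs * (\<Sum>y\<in>S. p0 t (y - X xs n) * g y)"
      by (simp only: sum_distrib_left step[OF \<open>length xs = n\<close>])
  qed
  also have "\<dots> \<le> (\<Sum>xs\<in>LS S n. W xs * (A ^^ t) g (X xs n))"
    by (intro sum_mono mult_left_mono sum_le_E assms W0 Suc.prems)
  also have "\<dots> \<le> (A ^^ (i n - i 0)) ((A ^^ t) g) (0,0)"
    unfolding W_def using Suc.prems by (intro Suc.IH A_nonneg) auto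
  also have "\<dots> = (A ^^ (i (Suc n) - i 0)) g (0,0)"
  proof -
    have "i 0 \<le> i n" using Suc.prems(2) by (induction n) (auto, meson le_trans less_Suc_eq)
    then have "i (Suc n) - i 0 = (i n - i 0) + t" using Suc.prems(2) by (auto simp: t_def)
    then show ?thesis by (simp add: funpow_add)
  qed
  finally show ?case .
qed



fun q :: "nat \<Rightarrow> int \<Rightarrow> real" where
  "q 0 m = (if m = 0 then 1 else 0)"
| "q (Suc n) m = (q n (m - 1) + q n (m + 1)) / 2"

lemma p0_q: "p0 n (a,b) = q n (a+b) * q n (a-b)"
proof (induction n arbitrary: a b)
  case 0 then show ?case by auto
next
  case (Suc n)
  have e: "a - 1 + b = a + b - 1" "a - 1 - b = a - b - 1" "a + 1 + b = a + b + 1" "a + 1 - b = a - b + 1"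
     "a + (b - 1) = a + b - 1" "a - (b - 1) = a - b + 1" "a + (b + 1) = a + b + 1" "a - (b + 1) = a - b - 1"
    by auto
  show ?case by (simp add: Suc e algebra_simps add_divide_distrib)
qed

definition Q :: "nat \<Rightarrow> int \<Rightarrow> nat" where
  "Q n m = (if even (int n + m) \<and> - int n \<le> m then n choose nat ((int n + m) div 2) else 0)"

lemma Q_Suc: "Q (Suc n) m = Q n (m - 1) + Q n (m + 1)"
proof (cases "even (int n + 1 + m)")
  case False
  then show ?thesis by (auto simp: Q_def)
next
  case True
  show ?thesis
  proof (cases "m < - int n - 1")
    case True then show ?thesis by (auto simp: Q_def)
  next
    case False
    show ?thesis
    proof (cases "m = - int n - 1")
      case True then show ?thesis by (simp add: Q_def)
    next
      case False2: False
      with False \<open>even (int n + 1 + m)\<close> have m: "m \<ge> - int n + 1" by presburger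
      define j where "j = nat ((int n + (m - 1)) div 2)"
      have y0: "(int n + (m - 1)) div 2 \<ge> 0" using m by simp
      have k: "nat ((int (Suc n) + m) div 2) = Suc j"
      proof -
        have "nat ((int (Suc n) + m) div 2) = nat ((int n + (m - 1)) div 2 + 1)"
          by (rule arg_cong[where f=nat]) presburger
        also have "\<dots> = Suc j" using y0 unfolding j_def by (simp add: nat_add_distrib)
        finally show ?thesis .
      qed
      have k2: "nat ((int n + (m + 1)) div 2) = Suc j"
      proof -
        have "nat ((int n + (m + 1)) div 2) = nat ((int n + (m - 1)) div 2 + 1)"
          by (rule arg_cong[where f=nat]) presburger
        also have "\<dots> = Suc j" using y0 unfolding j_def by (simp add: nat_add_distrib)
        finally show ?thesis .
      qed
      have "Q (Suc n) m = Suc n choose (Suc j)" using m \<open>even (int n + 1 + m)\<close> k by (simp add: Q_def)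
      also have "\<dots> = (n choose j) + (n choose (Suc j))" by simp
      also have "n choose j = Q n (m - 1)" using m \<open>even (int n + 1 + m)\<close> unfolding Q_def j_def by auto
      also have "n choose (Suc j) = Q n (m + 1)" using m \<open>even (int n + 1 + m)\<close> k2 unfolding Q_def by auto
      finally show ?thesis .
    qed
  qed
qed

lemma q_Q: "q n m = real (Q n m) / 2 ^ n"
proof (induction n arbitrary: m)
  case 0 then show ?case by (auto simp: Q_def)
next
  case (Suc n)
  show ?case by (simp add: Suc Q_Suc add_divide_distrib)
qed

lemma central_bound: "real ((2*k) choose k) ^ 2 * (2 * real k + 1) \<le> 16 ^ k"
proof (induction k)
  case 0 then show ?case by simp
next
  case (Suc k)
  have r: "real ((2*Suc k) choose (Suc k)) * (real k + 1) = 2 * (2 * real k + 1) * real ((2*k) choose k)"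
  proof -
    have a: "(2*Suc k) choose (Suc k) = (Suc (2*k) choose k) + (Suc (2*k) choose (Suc k))" by simp
    have b: "Suc (2*k) choose (Suc k) = Suc (2*k) choose k"
      using binomial_symmetric[of "Suc k" "Suc (2*k)"] by simp
    have c: "Suc (2*k) * ((2*k) choose k) = (Suc (2*k) choose (Suc k)) * Suc k"
      by (rule Suc_times_binomial_eq)
    have "real ((2*Suc k) choose (Suc k)) * (real k + 1) = 2 * real (Suc (2*k) choose (Suc k)) * real (Suc k)"
      using a b by simp
    also have "\<dots> = 2 * real (Suc (2*k) * ((2*k) choose k))" by (simp only: c of_nat_mult)
    finally have h: "real ((2*Suc k) choose (Suc k)) * (real k + 1) = 2 * real (Suc (2*k) * ((2*k) choose k))" .
    have "2 * real (Suc (2*k) * ((2*k) choose k)) = 2 * (2 * real k + 1) * real ((2*k) choose k)"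
      by (simp add: algebra_simps)
    with h show ?thesis by linarith
  qed
  define c where "c = real ((2*k) choose k)"
  define d where "d = real ((2*Suc k) choose (Suc k))"
  have r': "d * (real k + 1) = 2 * (2 * real k + 1) * c" using r by (simp add: c_def d_def)
  have IH: "c^2 * (2 * real k + 1) \<le> 16 ^ k" using Suc by (simp add: c_def)
  have "(d * (real k + 1))^2 * (2 * real (Suc k) + 1) = 4 * (2 * real k + 1) * (2 * real k + 3) * (c^2 * (2 * real k + 1))"
    unfolding r' by (simp add: power2_eq_square algebra_simps)
  also have "\<dots> \<le> 4 * (2 * real k + 1) * (2 * real k + 3) * 16 ^ k"
    by (intro mult_left_mono IH) auto
  also have "\<dots> \<le> 16 ^ Suc k * (real k + 1)^2"
    by (simp add: power2_eq_square algebra_simps)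
  finally have "(d * (real k + 1))^2 * (2 * real (Suc k) + 1) \<le> 16 ^ Suc k * (real k + 1)^2" .
  then have "d^2 * (2 * real (Suc k) + 1) * (real k + 1)^2 \<le> 16 ^ Suc k * (real k + 1)^2"
    by (simp only: power_mult_distrib mult_ac)
  then have "d^2 * (2 * real (Suc k) + 1) \<le> 16 ^ Suc k"
    by (rule mult_right_le_imp_le) auto
  then show ?case by (simp add: d_def)
qed

lemma max_bound: "real (n choose (n div 2)) ^ 2 * (real n + 1) \<le> 2 * 4 ^ n"
proof (cases "even n")
  case True
  then obtain k where n: "n = 2*k" by blast
  have "real (n choose (n div 2)) ^ 2 * (real n + 1) = real ((2*k) choose k) ^ 2 * (2 * real k + 1)"
    by (simp add: n)
  also have "\<dots> \<le> 16 ^ k" by (rule central_bound)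
  also have "\<dots> = 4 ^ n" by (simp add: n power_mult)
  finally have "real (n choose (n div 2)) ^ 2 * (real n + 1) \<le> 4 ^ n" .
  moreover have "(4::real) ^ n \<ge> 0" by simp
  ultimately show ?thesis by linarith
next
  case False
  define k where "k = n div 2"
  have n: "n = Suc (2*k)" using False unfolding k_def by presburger
  have dv: "n div 2 = k" using n by simp
  have "Suc (2*k) choose k \<le> 2 * ((2*k) choose k)"
  proof (cases k)
    case 0 then show ?thesis by simp
  next
    case (Suc j)
    have "Suc (2*k) choose k = ((2*k) choose j) + ((2*k) choose k)" using Suc by simp
    also have "\<dots> \<le> ((2*k) choose k) + ((2*k) choose k)" using binomial_maximum'[of k j] by simp
    finally show ?thesis by simp
  qed
  then have "real (Suc (2*k) choose k) \<le> real (2 * ((2*k) choose k))" by (rule of_nat_mono)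
  then have le: "real (n choose (n div 2)) \<le> 2 * real ((2*k) choose k)"
    using dv n by simp
  have "real (n choose (n div 2)) ^ 2 * (real n + 1) \<le> (2 * real ((2*k) choose k)) ^ 2 * (real n + 1)"
    by (intro mult_right_mono power_mono le) auto
  also have "\<dots> = 8 * (real ((2*k) choose k) ^ 2 * (real k + 1))"
    by (simp add: n power2_eq_square algebra_simps)
  also have "\<dots> \<le> 8 * (real ((2*k) choose k) ^ 2 * (2 * real k + 1))"
    by (intro mult_left_mono) auto
  also have "\<dots> \<le> 8 * 16 ^ k" using central_bound[of k] by simp
  also have "\<dots> = 2 * 4 ^ n" by (simp add: n power_mult)
  finally show ?thesis .
qed

lemma q_nonneg: "q n m \<ge> 0" by (simp add: q_Q)

lemma q_sq_bound: "q n m ^ 2 \<le> 2 / (real n + 1)"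
proof -
  have "Q n m \<le> n choose (n div 2)" unfolding Q_def using binomial_maximum by auto
  then have "q n m ^ 2 \<le> (real (n choose (n div 2)) / 2 ^ n) ^ 2"
    unfolding q_Q by (intro power_mono divide_right_mono) auto
  also have "\<dots> = real (n choose (n div 2)) ^ 2 / 4 ^ n"
    by (simp add: power_divide power_mult[symmetric] mult.commute[of n 2] power_mult)
  also have "\<dots> \<le> 2 / (real n + 1)"
    using max_bound[of n] by (simp add: field_simps)
  finally show ?thesis .
qed

lemma p0_bound: "p0 n x \<le> 2 / (real n + 1)"
proof -
  obtain a b where x: "x = (a,b)" by (cases x)
  have "p0 n x = q n (a+b) * q n (a-b)" by (simp add: x p0_q)
  also have "\<dots> \<le> (q n (a+b) ^ 2 + q n (a-b) ^ 2) / 2"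
    using sum_squares_ge_zero[of "q n (a+b) - q n (a-b)" 0] by (simp add: power2_eq_square algebra_simps)
  also have "\<dots> \<le> (2 / (real n + 1) + 2 / (real n + 1)) / 2"
    by (intro divide_right_mono add_mono q_sq_bound) auto
  also have "\<dots> = 2 / (real n + 1)" by (simp only: add_divide_distrib field_sum_of_halves)
  finally show ?thesis .
qed


lemma inner_eq: "infsum (\<lambda>y. sqnorm y * p0 m (y - z)) UNIV = sqnorm z + real m"
proof -
  have "infsum (\<lambda>y. sqnorm y * p0 m (y - z)) UNIV = infsum (\<lambda>y. p0 m (y - z) * sqnorm y) UNIV"
    by (simp add: mult.commute)
  also have "\<dots> = sqnorm z + real m" by (simp add: E_eq A_sq)
  finally show ?thesis .
qed

lemma sq_le: assumes "t \<ge> 1" shows "p0 t x ^ 2 \<le> (2 / real t) * p0 t x"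
proof -
  have "p0 t x \<le> 2 / (real t + 1)" by (rule p0_bound)
  also have "\<dots> \<le> 2 / real t" using assms by (simp add: frac_le)
  finally have "p0 t x \<le> 2 / real t" .
  then have "p0 t x * p0 t x \<le> (2 / real t) * p0 t x" using p0_nonneg[of t x] by (rule mult_right_mono)
  then show ?thesis by (simp only: power2_eq_square)
qed

theorem lemma22:
  shows "\<exists>c2 :: real. \<forall>(N::nat) (n::nat) (i::nat \<Rightarrow> nat).
     N \<ge> 1 \<longrightarrow> n \<ge> 1 \<longrightarrow> i 0 = 0 \<longrightarrow> (\<forall>k<n. i k < i (Suc k)) \<longrightarrow> i n \<le> N \<longrightarrow>
     (\<Sum>\<^sub>\<infinity> xs \<in> {xs :: (int \<times> int) list. length xs = n}.
        let x = (\<lambda>k. if k = 0 then (0, 0) else xs ! (k - 1)) in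
        (\<Prod>k\<in>{1..n}. (p0 (i k - i (k - 1)) (x k - x (k - 1))) ^ 2) *
        (\<Sum>\<^sub>\<infinity> y \<in> UNIV. sqnorm y * p0 (N - i n) (y - x n)) ^ 2)
     \<le> c2 ^ n * real N ^ 2 * (\<Prod>k\<in>{1..n}. 1 / real (i k - i (k - 1)))"
proof (intro exI[of _ 8] allI impI)
  fix N n :: nat and i :: "nat \<Rightarrow> nat"
  assume N1: "N \<ge> 1" and n1: "n \<ge> 1" and i0: "i 0 = 0" and mono: "\<forall>k<n. i k < i (Suc k)" and iN: "i n \<le> N"
  define m where "m = N - i n"
  define P where "P xs = (\<Prod>k\<in>{1..n}. p0 (i k - i (k - 1)) (X xs k - X xs (k - 1)))" for xs
  define C where "C = (\<Prod>k\<in>{1..n}. 2 / real (i k - i (k - 1)))"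
  define h where "h y = (sqnorm y + real m) ^ 2" for y
  define F where "F xs = (let x = (\<lambda>k. if k = 0 then (0, 0) else xs ! (k - 1)) in
        (\<Prod>k\<in>{1..n}. (p0 (i k - i (k - 1)) (x k - x (k - 1))) ^ 2) *
        (\<Sum>\<^sub>\<infinity> y \<in> UNIV. sqnorm y * p0 (N - i n) (y - x n)) ^ 2)" for xs
  have tpos: "i k - i (k - 1) \<ge> 1" if "k \<in> {1..n}" for k
  proof -
    from that have "k - 1 < n" "Suc (k - 1) = k" by auto
    with mono have "i (k - 1) < i k" by metis
    then show ?thesis by simp
  qed
  have Fnn: "F xs \<ge> 0" for xs unfolding F_def Let_def by (intro mult_nonneg_nonneg prod_nonneg) auto
  have Fle: "F xs \<le> C * (P xs * h (X xs n))" for xs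
  proof -
    have xX: "(\<lambda>k. if k = 0 then (0, 0) else xs ! (k - 1)) = X xs" by (rule ext) (simp add: X_def)
    have "F xs = (\<Prod>k\<in>{1..n}. (p0 (i k - i (k - 1)) (X xs k - X xs (k - 1))) ^ 2) * h (X xs n)"
      unfolding F_def Let_def xX h_def m_def by (simp add: inner_eq)
    also have "\<dots> \<le> (\<Prod>k\<in>{1..n}. (2 / real (i k - i (k - 1))) * p0 (i k - i (k - 1)) (X xs k - X xs (k - 1))) * h (X xs n)"
      by (intro mult_right_mono prod_mono conjI sq_le tpos) (auto simp: h_def)
    also have "\<dots> = C * (P xs * h (X xs n))" by (simp only: C_def P_def prod.distrib mult.assoc)
    finally show ?thesis .
  qed
  have Cnn: "C \<ge> 0" unfolding C_def by (intro prod_nonneg) auto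
  have fin: "sum F G \<le> 2 * C * real N ^ 2" if G: "finite G" "G \<subseteq> {xs. length xs = n}" for G
  proof -
    define S where "S = \<Union> (set ` G)"
    have fS: "finite S" using G by (simp add: S_def)
    have GS: "G \<subseteq> LS S n" using G by (auto simp: S_def LS_def)
    have "sum F G \<le> sum F (LS S n)" by (rule sum_mono2[OF finite_LS[OF fS] GS]) (simp add: Fnn)
    also have "\<dots> \<le> (\<Sum>xs\<in>LS S n. C * (P xs * h (X xs n)))" by (intro sum_mono Fle)
    also have "\<dots> = C * (\<Sum>xs\<in>LS S n. P xs * h (X xs n))" by (simp add: sum_distrib_left)
    also have "\<dots> \<le> C * (A ^^ (i n - i 0)) h (0,0)"
      unfolding P_def using mono
      by (intro mult_left_mono Cnn list_bound fS) (auto simp: h_def less_imp_le)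
    also have "(A ^^ (i n - i 0)) h (0,0) = 2*real (i n)^2 - real (i n) + 2*real m*real (i n) + real m^2"
      using A_h[of "i n" "real m"] unfolding h_def i0 by (simp add: sqnorm_def)
    also have "\<dots> \<le> 2 * real N ^ 2"
    proof -
      have "real N = real (i n) + real m" using iN by (simp add: m_def)
      then show ?thesis by (simp add: power2_eq_square algebra_simps)
    qed
    finally show ?thesis using Cnn by (simp add: mult.assoc mult_left_mono)
  qed
  have summ: "F summable_on {xs. length xs = n}"
    by (rule nonneg_bdd_above_summable_on) (use Fnn fin in \<open>auto intro!: bdd_aboveI2\<close>)
  have "infsum F {xs. length xs = n} \<le> 2 * C * real N ^ 2"
    by (rule infsum_le_finite_sums[OF summ fin]) auto
  also have "2 * C = 2 * 2 ^ n * (\<Prod>k\<in>{1..n}. 1 / real (i k - i (k - 1)))"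
  proof -
    have "C = (\<Prod>k\<in>{1..n}. 2 * (1 / real (i k - i (k - 1))))" unfolding C_def by simp
    also have "\<dots> = 2 ^ n * (\<Prod>k\<in>{1..n}. 1 / real (i k - i (k - 1)))"
      by (simp only: prod.distrib prod_constant card_atLeastAtMost) simp
    finally show ?thesis by simp
  qed
  also have "2 * 2 ^ n * (\<Prod>k\<in>{1..n}. 1 / real (i k - i (k - 1))) * real N ^ 2 \<le> 8 ^ n * real N ^ 2 * (\<Prod>k\<in>{1..n}. 1 / real (i k - i (k - 1)))"
  proof -
    have "(2::real) * 2 ^ n \<le> 8 ^ n"
    proof -
      have "(2::real) * 2 ^ n = 2 ^ (Suc n)" by simp
      also have "\<dots> \<le> 2 ^ (3 * n)" using n1 by (intro power_increasing) auto
      also have "\<dots> = 8 ^ n" by (simp add: power_mult)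
      finally show ?thesis .
    qed
    moreover have "(\<Prod>k\<in>{1..n}. 1 / real (i k - i (k - 1))) \<ge> 0" by (intro prod_nonneg) auto
    ultimately have "2 * 2 ^ n * (\<Prod>k\<in>{1..n}. 1 / real (i k - i (k - 1))) * real N ^ 2 \<le> 8 ^ n * (\<Prod>k\<in>{1..n}. 1 / real (i k - i (k - 1))) * real N ^ 2"
      by (intro mult_right_mono) auto
    then show ?thesis by (simp only: mult_ac)
  qed
  finally show "infsum F {xs. length xs = n} \<le> 8 ^ n * real N ^ 2 * (\<Prod>k\<in>{1..n}. 1 / real (i k - i (k - 1)))" .
qed

end
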